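(* Let $a_0,\ldots,a_4$ be elements of an algebraically closed field of characteristic $0$ with $a_0a_1a_2a_3a_4\neq 0$. Then the singular points of $S^{(a_0,\ldots,a_4)}$ are exactly the points of the form $$\Big(\tfrac{1}{\sqrt{a_0}} : (-1)^{i_1}\tfrac{1}{\sqrt{a_1}} : (-1)^{i_2}\tfrac{1}{\sqrt{a_2}} : (-1)^{i_3}\tfrac{1}{\sqrt{a_3}} : (-1)^{i_4}\tfrac{1}{\sqrt{a_4}}\Big),\qquad i_1,\ldots,i_4\in\{0,1\},$$ (for fixed choices of the square roots) which lie on the hyperplane $X_0+X_1+X_2+X_3+X_4=0$.
   Context: For coefficients $a_0,\ldots,a_4$ (not all zero), $S^{(a_0,\ldots,a_4)}$ denotes the cubic surface in $\mathbf{P}^4$ (with coordinates $X_0,\ldots,X_4$) defined by the system $a_0X_0^3+a_1X_1^3+a_2X_2^3+a_3X_3^3+a_4X_4^3=0$, $X_0+X_1+X_2+X_3+X_4=0$. *)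

theory Defs
  imports "HOL-Computational_Algebra.Polynomial"
begin

text \<open>Points of P^4 are represented by nonzero coordinate vectors x :: nat => 'a,
  using only the coordinates x 0, ..., x 4.\<close>

definition nonzero_vec :: "(nat \<Rightarrow> 'a::field) \<Rightarrow> bool" where
  "nonzero_vec x \<longleftrightarrow> (\<exists>i<5. x i \<noteq> 0)"

definition proj_eq :: "(nat \<Rightarrow> 'a::field) \<Rightarrow> (nat \<Rightarrow> 'a) \<Rightarrow> bool" where
  "proj_eq x y \<longleftrightarrow> (\<exists>c. c \<noteq> 0 \<and> (\<forall>i<5. x i = c * y i))"

definition cubicF :: "(nat \<Rightarrow> 'a::field) \<Rightarrow> (nat \<Rightarrow> 'a) \<Rightarrow> 'a" where
  "cubicF a x = (\<Sum>i<5. a i * x i ^ 3)"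

definition linL :: "(nat \<Rightarrow> 'a::field) \<Rightarrow> 'a" where
  "linL x = (\<Sum>i<5. x i)"

definition gradF :: "(nat \<Rightarrow> 'a::field) \<Rightarrow> (nat \<Rightarrow> 'a) \<Rightarrow> nat \<Rightarrow> 'a" where
  "gradF a x i = 3 * a i * x i ^ 2"

definition gradL :: "(nat \<Rightarrow> 'a::field) \<Rightarrow> nat \<Rightarrow> 'a" where
  "gradL x i = 1"

text \<open>x (nonzero) represents a singular point of S^(a): it lies on S and the
  Jacobian matrix of (F, L) at x has rank < 2, i.e. its two rows are linearly dependent.\<close>
definition singular_point :: "(nat \<Rightarrow> 'a::field) \<Rightarrow> (nat \<Rightarrow> 'a) \<Rightarrow> bool" where
  "singular_point a x \<longleftrightarrow> nonzero_vec x \<and> cubicF a x = 0 \<and> linL x = 0 \<and>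
     (\<exists>\<mu> \<nu>. (\<mu> \<noteq> 0 \<or> \<nu> \<noteq> 0) \<and> (\<forall>i<5. \<mu> * gradF a x i + \<nu> * gradL x i = 0))"

text \<open>The candidate point (1/r_0 : (-1)^e_1/r_1 : ... : (-1)^e_4/r_4), r_i a square root of a_i.\<close>
definition cand_point :: "(nat \<Rightarrow> 'a::field) \<Rightarrow> (nat \<Rightarrow> nat) \<Rightarrow> nat \<Rightarrow> 'a" where
  "cand_point r e i = (if i = 0 then 1 / r 0 else (-1) ^ e i / r i)"

end

theory Submission
  imports Defs
begin

lemma cand_sq:
  fixes r :: "nat \<Rightarrow> 'a::field"
  assumes "r i \<noteq> 0" "r i ^ 2 = a i"
  shows "a i * cand_point r e i ^ 2 = 1"
proof -
  have "((-1::'a) ^ e i) ^ 2 = 1" by (simp add: power_mult[symmetric] mult.commute[of _ 2] power_mult)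
  then show ?thesis using assms
    by (auto simp: cand_point_def power_divide field_simps)
qed

theorem mainTheorem2:
  fixes a r :: "nat \<Rightarrow> 'a::{alg_closed_field, field_char_0}"
  assumes "(\<Prod>i<5. a i) \<noteq> 0"
    and "\<forall>i<5. r i ^ 2 = a i"
  shows "\<forall>x. nonzero_vec x \<longrightarrow>
           (singular_point a x \<longleftrightarrow>
            (\<exists>e. (\<forall>i\<in>{1..4}. e i \<in> {0, 1}) \<and> linL (cand_point r e) = 0 \<and>
                 proj_eq x (cand_point r e)))"
proof (intro allI impI iffI)
  have a0: "\<And>i. i < 5 \<Longrightarrow> a i \<noteq> 0" using assms(1) by auto
  have r0: "\<And>i. i < 5 \<Longrightarrow> r i \<noteq> 0" using a0 assms(2) by fastforce
  fix x :: "nat \<Rightarrow> 'a"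
  assume nz: "nonzero_vec x"
  {
    assume "singular_point a x"
    then obtain \<mu> \<nu> where L: "linL x = 0" and mn: "\<mu> \<noteq> 0 \<or> \<nu> \<noteq> 0"
      and g: "\<forall>i<5. \<mu> * gradF a x i + \<nu> * gradL x i = 0"
      unfolding singular_point_def by blast
    have g': "\<And>i. i < 5 \<Longrightarrow> \<mu> * (3 * a i * x i ^ 2) + \<nu> = 0"
      using g by (simp add: gradF_def gradL_def)
    have mu: "\<mu> \<noteq> 0" using g'[of 0] mn by auto
    define k where "k = - \<nu> / (3 * \<mu>)"
    have ak: "\<And>i. i < 5 \<Longrightarrow> a i * x i ^ 2 = k"
    proof -
      fix i :: nat assume "i < 5"
      from g'[OF this] mu show "a i * x i ^ 2 = k" unfolding k_def
        by (simp add: field_simps) (metis add.commute add_eq_0_iff mult.assoc mult.left_commute)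
    qed
    obtain j where j: "j < 5" "x j \<noteq> 0" using nz unfolding nonzero_vec_def by blast
    have k0: "k \<noteq> 0" using ak[OF j(1)] j a0 by auto
    obtain s where s: "s ^ 2 = k" using nth_root_exists[of 2 k] by auto
    have s0: "s \<noteq> 0" using s k0 by auto
    have xs: "\<And>i. i < 5 \<Longrightarrow> x i = s / r i \<or> x i = - (s / r i)"
    proof -
      fix i :: nat assume i: "i < 5"
      have "x i ^ 2 = (s / r i) ^ 2" using ak[OF i] s r0[OF i] a0[OF i] k0 assms(2) i
        by (auto simp: power_divide field_simps)
      then show "x i = s / r i \<or> x i = - (s / r i)" by (simp add: power2_eq_iff)
    qed
    define t where "t = (if x 0 = s / r 0 then s else - s)"
    have t0: "t \<noteq> 0" using s0 by (simp add: t_def)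
    have xt: "\<And>i. i < 5 \<Longrightarrow> x i = t / r i \<or> x i = - (t / r i)"
      using xs by (auto simp: t_def)
    have xt0: "x 0 = t / r 0" using xs[of 0] by (auto simp: t_def)
    define e where "e = (\<lambda>i. if x i = t / r i then 0 else (1::nat))"
    have xe: "\<And>i. i < 5 \<Longrightarrow> x i = t * cand_point r e i"
    proof -
      fix i :: nat assume i: "i < 5"
      show "x i = t * cand_point r e i"
        using xt[OF i] xt0 by (auto simp: e_def cand_point_def)
    qed
    have "linL x = t * linL (cand_point r e)"
      unfolding linL_def sum_distrib_left using xe by (intro sum.cong) auto
    then have "linL (cand_point r e) = 0" using L t0 by simp
    moreover have "proj_eq x (cand_point r e)" unfolding proj_eq_def using xe t0 by blast
    moreover have "\<forall>i\<in>{1..4}. e i \<in> {0, 1}" by (simp add: e_def)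
    ultimately show "\<exists>e. (\<forall>i\<in>{1..4}. e i \<in> {0, 1}) \<and> linL (cand_point r e) = 0 \<and>
                 proj_eq x (cand_point r e)" by blast
  }
  {
    assume "\<exists>e. (\<forall>i\<in>{1..4}. e i \<in> {0, 1}) \<and> linL (cand_point r e) = 0 \<and>
                 proj_eq x (cand_point r e)"
    then obtain e c where Lc: "linL (cand_point r e) = 0" and c0: "c \<noteq> 0"
      and xe: "\<forall>i<5. x i = c * cand_point r e i"
      unfolding proj_eq_def by blast
    have L: "linL x = 0"
    proof -
      have "linL x = c * linL (cand_point r e)"
        unfolding linL_def sum_distrib_left using xe by (intro sum.cong) auto
      then show ?thesis using Lc by simp
    qed
    have ax: "\<And>i. i < 5 \<Longrightarrow> a i * x i ^ 2 = c ^ 2"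
    proof -
      fix i :: nat assume i: "i < 5"
      have "a i * x i ^ 2 = c ^ 2 * (a i * cand_point r e i ^ 2)"
        using xe i by (simp add: power_mult_distrib)
      also have "\<dots> = c ^ 2" using cand_sq[of r i a e, OF r0[OF i]] assms(2) i by simp
      finally show "a i * x i ^ 2 = c ^ 2" .
    qed
    have "cubicF a x = (\<Sum>i<5. c ^ 2 * x i)"
      unfolding cubicF_def
    proof (intro sum.cong refl)
      fix i assume "i \<in> {..<5::nat}"
      then have "a i * x i ^ 2 = c ^ 2" using ax by simp
      then show "a i * x i ^ 3 = c ^ 2 * x i"
        by (metis mult.assoc power_Suc2 numeral_3_eq_3 numeral_2_eq_2)
    qed
    also have "\<dots> = c ^ 2 * linL x" by (simp add: linL_def sum_distrib_left)
    finally have F: "cubicF a x = 0" using L by simp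
    have "\<forall>i<5. 1 * gradF a x i + (- 3 * c ^ 2) * gradL x i = 0"
      using ax by (simp add: gradF_def gradL_def mult.assoc)
    then show "singular_point a x" unfolding singular_point_def using nz F L
      by (metis one_neq_zero)
  }
qed

end
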